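(* There is a function $g$ such that for all integers $\ell\ge 3$ and $t,k\ge 1$, every $\mathcal{O}_k$-free graph $G$ with no $K_{t,t}$ subgraph contains a set $X$ of at most $g(\ell,t,k)$ vertices such that $G-X$ has girth at least $\ell$.
   Context: All graphs are finite and simple. Two vertex-disjoint subgraphs are independent if there is no edge between them. A graph $G$ is $\mathcal{O}_k$-free if it does not contain $k$ pairwise vertex-disjoint and pairwise independent cycles; equivalently, $G$ has no induced subgraph isomorphic to a disjoint union of $k$ cycles. The girth of a graph is the minimum length of a cycle in it (infinite if the graph is acyclic). *)

theory Defs
  imports Main "HOL-Library.Extended_Nat"
begin

definition simple_graph :: "nat set \<Rightarrow> (nat \<Rightarrow> nat \<Rightarrow> bool) \<Rightarrow> bool" where
  "simple_graph V E \<longleftrightarrow> finite V \<and> (\<forall>u v. E u v \<longrightarrow> u \<in> V \<and> v \<in> V)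
     \<and> (\<forall>u v. E u v \<longrightarrow> E v u) \<and> (\<forall>u. \<not> E u u)"

definition is_cycle :: "nat set \<Rightarrow> (nat \<Rightarrow> nat \<Rightarrow> bool) \<Rightarrow> nat list \<Rightarrow> bool" where
  "is_cycle V E c \<longleftrightarrow> length c \<ge> 3 \<and> distinct c \<and> set c \<subseteq> V
     \<and> (\<forall>i < length c. E (c ! i) (c ! ((i + 1) mod length c)))"

definition independent_sets :: "(nat \<Rightarrow> nat \<Rightarrow> bool) \<Rightarrow> nat set \<Rightarrow> nat set \<Rightarrow> bool" where
  "independent_sets E A B \<longleftrightarrow> A \<inter> B = {} \<and> (\<forall>u\<in>A. \<forall>v\<in>B. \<not> E u v)"

definition Ok_free :: "nat \<Rightarrow> nat set \<Rightarrow> (nat \<Rightarrow> nat \<Rightarrow> bool) \<Rightarrow> bool" where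
  "Ok_free k V E \<longleftrightarrow> \<not> (\<exists>cs :: nat list list. length cs = k
       \<and> (\<forall>i < k. is_cycle V E (cs ! i))
       \<and> (\<forall>i < k. \<forall>j < k. i \<noteq> j \<longrightarrow> independent_sets E (set (cs ! i)) (set (cs ! j))))"

definition has_Ktt :: "nat \<Rightarrow> nat set \<Rightarrow> (nat \<Rightarrow> nat \<Rightarrow> bool) \<Rightarrow> bool" where
  "has_Ktt t V E \<longleftrightarrow> (\<exists>A B. A \<subseteq> V \<and> B \<subseteq> V \<and> A \<inter> B = {} \<and> card A = t \<and> card B = t
       \<and> (\<forall>a\<in>A. \<forall>b\<in>B. E a b))"

definition del_edges :: "(nat \<Rightarrow> nat \<Rightarrow> bool) \<Rightarrow> nat set \<Rightarrow> nat \<Rightarrow> nat \<Rightarrow> bool" where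
  "del_edges E X = (\<lambda>u v. E u v \<and> u \<notin> X \<and> v \<notin> X)"

text \<open>Girth: minimum cycle length, infinite if acyclic.\<close>
definition girth :: "nat set \<Rightarrow> (nat \<Rightarrow> nat \<Rightarrow> bool) \<Rightarrow> enat" where
  "girth V E = (INF c \<in> {c. is_cycle V E c}. enat (length c))"

end

theory Submission
  imports Defs "HOL-Library.Ramsey"
begin

definition good :: "nat \<Rightarrow> nat set \<Rightarrow> (nat \<Rightarrow> nat \<Rightarrow> bool) \<Rightarrow> nat list list \<Rightarrow> bool" where
  "good l V E cs \<longleftrightarrow> (\<forall>i<length cs. is_cycle V E (cs!i) \<and> length (cs!i) < l) \<and>
     (\<forall>i<length cs. \<forall>j<length cs. i \<noteq> j \<longrightarrow> set (cs!i) \<inter> set (cs!j) = {})"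

lemma lt_sq: "(a::nat) < l \<Longrightarrow> b < l \<Longrightarrow> a*l+b < l*l"
proof -
  assume a: "a < l" and b: "b < l"
  have "(a+1)*l \<le> l*l" using a by (intro mult_le_mono1) simp
  then show ?thesis using b by (simp add: algebra_simps)
qed

lemma key:
  assumes sg: "simple_graph V E" and ok: "Ok_free k V E" and nk: "\<not> has_Ktt t V E"
    and gd: "good l V E cs" and pl: "partn_lst {..<N} (replicate (Suc (l*l)) (k+2*t)) 2"
  shows "length cs < N"
proof (rule ccontr)
  assume "\<not> length cs < N"
  hence NL: "N \<le> length cs" by simp
  have cyc: "\<And>i. i < length cs \<Longrightarrow> is_cycle V E (cs!i) \<and> length (cs!i) < l"
    using gd by (auto simp: good_def)
  have dsj: "\<And>i j. i < length cs \<Longrightarrow> j < length cs \<Longrightarrow> i \<noteq> j \<Longrightarrow> set (cs!i) \<inter> set (cs!j) = {}"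
    using gd by (auto simp: good_def)
  have sym: "\<And>u v. E u v \<Longrightarrow> E v u" using sg by (auto simp: simple_graph_def)
  define ex where "ex i j \<longleftrightarrow> (\<exists>p<length(cs!i). \<exists>q<length(cs!j). E (cs!i!p) (cs!j!q))" for i j
  define pq where "pq i j = (SOME x. fst x < length(cs!i) \<and> snd x < length (cs!j) \<and> E (cs!i!fst x) (cs!j!snd x))" for i j
  have pqp: "fst (pq i j) < length(cs!i) \<and> snd (pq i j) < length (cs!j) \<and> E (cs!i!fst (pq i j)) (cs!j!snd (pq i j))"
    if exij: "ex i j" for i j
  proof -
    obtain p q where "p<length(cs!i)" "q<length(cs!j)" "E (cs!i!p) (cs!j!q)" using exij ex_def by auto
    hence "\<exists>x. fst x < length(cs!i) \<and> snd x < length (cs!j) \<and> E (cs!i!fst x) (cs!j!snd x)"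
      by (intro exI[of _ "(p,q)"]) simp
    thus ?thesis unfolding pq_def by (rule someI_ex)
  qed
  define col where "col i j = (if ex i j then Suc (fst (pq i j) * l + snd (pq i j)) else 0)" for i j
  define f where "f S = col (Min S) (Max S)" for S :: "nat set"
  have colb: "col i j < Suc (l*l)" if "i < length cs" "j < length cs" for i j
  proof (cases "ex i j")
    case True
    with pqp[OF True] cyc[OF that(1)] cyc[OF that(2)] show ?thesis
      using lt_sq[of "fst (pq i j)" l "snd (pq i j)"] by (simp add: col_def)
  qed (simp add: col_def)
  have fin: "f \<in> nsets {..<N} 2 \<rightarrow> {..<length (replicate (Suc (l*l)) (k+2*t))}"
  proof
    fix S assume "S \<in> nsets {..<N} 2"
    then obtain a b where "S = {a,b}" "a < N" "b < N" by (auto elim!: nsets2_E)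
    then show "f S \<in> {..<length (replicate (Suc (l*l)) (k+2*t))}"
      using colb NL by (auto simp: f_def min_def max_def)
  qed
  obtain c H where c: "c < length (replicate (Suc (l*l)) (k+2*t))"
    and H: "H \<in> nsets {..<N} (replicate (Suc (l*l)) (k+2*t) ! c)" and mono: "f ` nsets H 2 \<subseteq> {c}"
    using partn_lstE[OF pl fin refl] by blast
  have Hc: "H \<subseteq> {..<N}" "finite H" "card H = k + 2*t" proof -
    have "replicate (Suc (l*l)) (k+2*t) ! c = k+2*t" using c by (simp del: replicate.simps)
    thus "H \<subseteq> {..<N}" "finite H" "card H = k + 2*t" using H by (auto simp: nsets_def finite_subset)
  qed
  have Hlt: "\<And>i. i \<in> H \<Longrightarrow> i < length cs" using Hc NL by auto
  have colc: "col a b = c" if "a \<in> H" "b \<in> H" "a < b" for a b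
  proof -
    have "{a,b} \<in> nsets H 2" using that by simp
    hence "f {a,b} = c" using mono by blast
    moreover have "Min {a,b} = a" "Max {a,b} = b" using that by auto
    ultimately show ?thesis by (simp add: f_def)
  qed
  show False
  proof (cases "c = 0")
    case True
    obtain H' where H': "H' \<subseteq> H" "card H' = k"
      using obtain_subset_with_card_n[of k H] Hc by auto
    have fH': "finite H'" using H' Hc finite_subset by blast
    define js where "js = sorted_list_of_set H'"
    have js: "length js = k" "distinct js" "set js = H'" using H' fH' by (auto simp: js_def)
    define cs' where "cs' = map (\<lambda>j. cs!j) js"
    have "\<exists>cs :: nat list list. length cs = k
       \<and> (\<forall>i < k. is_cycle V E (cs ! i))
       \<and> (\<forall>i < k. \<forall>j < k. i \<noteq> j \<longrightarrow> independent_sets E (set (cs ! i)) (set (cs ! j)))"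
    proof (intro exI[of _ cs'] conjI allI impI)
      show "length cs' = k" using js by (simp add: cs'_def)
    next
      fix i assume "i < k"
      hence "js!i \<in> H" using js H' nth_mem by blast
      thus "is_cycle V E (cs'!i)" using cyc Hlt \<open>i<k\<close> js by (simp add: cs'_def)
    next
      fix i j assume ij: "i < k" "j < k" "i \<noteq> j"
      define a where "a = js!i"
      define b where "b = js!j"
      have ab: "a \<in> H" "b \<in> H" "a \<noteq> b" using js H' ij nth_mem unfolding a_def b_def
        by (auto simp: nth_eq_iff_index_eq)
      have noex: "\<not> ex x y" if "x \<in> H" "y \<in> H" "x < y" for x y
        using colc[OF that] True by (auto simp: col_def split: if_splits)
      have "independent_sets E (set (cs!a)) (set (cs!b))"
        unfolding independent_sets_def
      proof (intro conjI ballI)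
        show "set (cs ! a) \<inter> set (cs ! b) = {}" using dsj Hlt ab by blast
      next
        fix u v assume uv: "u \<in> set (cs!a)" "v \<in> set (cs!b)"
        then obtain p q where pq: "p < length (cs!a)" "u = cs!a!p" "q < length (cs!b)" "v = cs!b!q"
          by (auto simp: in_set_conv_nth)
        show "\<not> E u v"
        proof
          assume e: "E u v"
          show False
          proof (cases "a < b")
            case True
            thus False using noex[OF ab(1,2) True] e pq ex_def by blast
          next
            case False
            hence "b < a" using ab by simp
            thus False using noex[OF ab(2,1)] sym[OF e] pq ex_def by blast
          qed
        qed
      qed
      thus "independent_sets E (set (cs' ! i)) (set (cs' ! j))"
        using ij js by (simp add: cs'_def a_def b_def)
    qed
    thus False using ok by (simp add: Ok_free_def)
  next
    case False
    define p0 where "p0 = (c - 1) div l"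
    define q0 where "q0 = (c - 1) mod l"
    have edge: "p0 < length (cs!a) \<and> q0 < length (cs!b) \<and> E (cs!a!p0) (cs!b!q0)"
      if "a \<in> H" "b \<in> H" "a < b" for a b
    proof -
      have cc: "col a b = c" using colc[OF that] .
      hence ex: "ex a b" using False by (auto simp: col_def split: if_splits)
      note P = pqp[OF ex]
      have lb: "snd (pq a b) < l" using P cyc Hlt that by fastforce
      have "c - 1 = fst (pq a b) * l + snd (pq a b)" using cc ex by (simp add: col_def)
      hence "p0 = fst (pq a b)" "q0 = snd (pq a b)" using lb unfolding p0_def q0_def by auto
      thus ?thesis using P by simp
    qed
    define hs where "hs = sorted_list_of_set H"
    have hs: "length hs = k + 2*t" "distinct hs" "set hs = H" "sorted_wrt (<) hs"
      using Hc by (auto simp: hs_def strict_sorted_list_of_set)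
    define L where "L = set (take t hs)"
    define U where "U = set (take t (drop t hs))"
    have LU: "i < j" if "i \<in> L" "j \<in> U" for i j
    proof -
      have "sorted_wrt (<) (take t hs @ drop t hs)" using hs by simp
      hence "\<forall>x\<in>set (take t hs). \<forall>y\<in>set (drop t hs). x < y" by (metis sorted_wrt_append)
      moreover have "j \<in> set (drop t hs)" using that(2) set_take_subset unfolding U_def by fast
      ultimately show ?thesis using that(1) unfolding L_def by blast
    qed
    have LH: "L \<subseteq> H" "U \<subseteq> H" using hs unfolding L_def U_def
      by (metis set_take_subset, metis set_drop_subset set_take_subset subset_trans)
    have cL: "card L = t" unfolding L_def using hs by (simp add: distinct_card)
    have cU: "card U = t" unfolding U_def using hs by (simp add: distinct_card)
    have mem: "\<And>a b. a \<in> L \<Longrightarrow> b \<in> U \<Longrightarrow> cs!a!p0 \<in> set (cs!a) \<and> cs!b!q0 \<in> set (cs!b)"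
    proof -
      fix a b assume "a \<in> L" "b \<in> U"
      hence "a \<in> H" "b \<in> H" "a < b" using LU LH by auto
      with edge[of a b] show "cs!a!p0 \<in> set (cs!a) \<and> cs!b!q0 \<in> set (cs!b)" by (simp add: nth_mem)
    qed
    define A where "A = (\<lambda>i. cs!i!p0) ` L"
    define B where "B = (\<lambda>j. cs!j!q0) ` U"
    have Lm: "\<And>a. a \<in> L \<Longrightarrow> cs!a!p0 \<in> set (cs!a)" and Um: "\<And>b. b \<in> U \<Longrightarrow> cs!b!q0 \<in> set (cs!b)"
    proof -
      fix a assume a: "a \<in> L"
      show "cs!a!p0 \<in> set (cs!a)"
      proof (cases "U = {}")
        case True
        hence "t = 0" using cU by auto
        thus ?thesis using a by (simp add: L_def)
      next
        case False
        then obtain b where "b \<in> U" by auto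
        thus ?thesis using mem a by blast
      qed
    next
      fix b assume b: "b \<in> U"
      show "cs!b!q0 \<in> set (cs!b)"
      proof (cases "L = {}")
        case True
        hence "t = 0" using cL by auto
        thus ?thesis using b by (simp add: U_def)
      next
        case False
        then obtain a where "a \<in> L" by auto
        thus ?thesis using mem b by blast
      qed
    qed
    have injL: "inj_on (\<lambda>i. cs!i!p0) L"
    proof (rule inj_onI)
      fix x y assume "x \<in> L" "y \<in> L" "cs!x!p0 = cs!y!p0"
      thus "x = y" using Lm[of x] Lm[of y] dsj[of x y] Hlt LH by auto
    qed
    have injU: "inj_on (\<lambda>i. cs!i!q0) U"
    proof (rule inj_onI)
      fix x y assume "x \<in> U" "y \<in> U" "cs!x!q0 = cs!y!q0"
      thus "x = y" using Um[of x] Um[of y] dsj[of x y] Hlt LH by auto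
    qed
    have setV: "\<And>i. i \<in> H \<Longrightarrow> set (cs!i) \<subseteq> V" using cyc Hlt by (auto simp: is_cycle_def)
    have AV: "A \<subseteq> V" using Lm setV LH unfolding A_def by blast
    have BV: "B \<subseteq> V" using Um setV LH unfolding B_def by blast
    have cA: "card A = t" using injL cL by (simp add: A_def card_image)
    have cB: "card B = t" using injU cU by (simp add: B_def card_image)
    have AB: "A \<inter> B = {}"
    proof (rule ccontr)
      assume "A \<inter> B \<noteq> {}"
      then obtain a b where ab: "a \<in> L" "b \<in> U" "cs!a!p0 = cs!b!q0" unfolding A_def B_def by auto
      have "a < b" using LU ab by blast
      thus False using dsj[of a b] Lm[OF ab(1)] Um[OF ab(2)] ab(3) Hlt LH ab by auto
    qed
    have EE: "\<forall>x\<in>A. \<forall>y\<in>B. E x y"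
    proof (intro ballI)
      fix x y assume "x \<in> A" "y \<in> B"
      then obtain a b where "a \<in> L" "b \<in> U" "x = cs!a!p0" "y = cs!b!q0" unfolding A_def B_def by auto
      thus "E x y" using edge LU LH by blast
    qed
    have "has_Ktt t V E" unfolding has_Ktt_def using AV BV cA cB AB EE by blast
    thus False using nk by simp
  qed
qed


lemma bound:
  assumes sg: "simple_graph V E" and ok: "Ok_free k V E" and nk: "\<not> has_Ktt t V E"
    and pl: "partn_lst {..<N} (replicate (Suc (l*l)) (k+2*t)) 2"
  shows "\<exists>X. X \<subseteq> V \<and> card X \<le> N * l \<and> girth (V - X) (del_edges E X) \<ge> enat l"
proof -
  define P where "P m \<longleftrightarrow> (\<exists>cs. good l V E cs \<and> length cs = m)" for m
  have P0: "P 0" unfolding P_def by (intro exI[of _ "[]"]) (simp add: good_def)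
  have Pb: "\<And>m. P m \<Longrightarrow> m \<le> N" using key[OF sg ok nk _ pl] unfolding P_def
    by (metis less_imp_le)
  define m where "m = (GREATEST m. P m)"
  have Pm: "P m" unfolding m_def by (rule GreatestI_nat[of P 0 N, OF P0 Pb])
  have mx: "\<And>y. P y \<Longrightarrow> y \<le> m" unfolding m_def using Pb Greatest_le_nat by blast
  obtain cs where gd: "good l V E cs" and lc: "length cs = m" using Pm P_def by blast
  have lN: "length cs < N" using key[OF sg ok nk gd pl] .
  have cyc: "\<And>i. i < length cs \<Longrightarrow> is_cycle V E (cs!i) \<and> length (cs!i) < l"
    using gd by (auto simp: good_def)
  define X where "X = (\<Union>i\<in>{..<length cs}. set (cs!i))"
  have XV: "X \<subseteq> V" unfolding X_def using cyc by (auto simp: is_cycle_def)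
  have "card X \<le> (\<Sum>i<length cs. card (set (cs!i)))" unfolding X_def by (rule card_UN_le) simp
  also have "\<dots> \<le> (\<Sum>i<length cs. l)"
    by (rule sum_mono) (metis card_length cyc le_trans less_imp_le lessThan_iff)
  also have "\<dots> \<le> N * l" using lN by simp
  finally have cX: "card X \<le> N * l" .
  have gi: "girth (V - X) (del_edges E X) \<ge> enat l"
    unfolding girth_def
  proof (rule INF_greatest)
    fix c assume "c \<in> {c. is_cycle (V - X) (del_edges E X) c}"
    hence cc: "is_cycle (V - X) (del_edges E X) c" by simp
    show "enat l \<le> enat (length c)"
    proof (rule ccontr)
      assume "\<not> enat l \<le> enat (length c)"
      hence cl: "length c < l" by simp
      have cG: "is_cycle V E c" using cc by (auto simp: is_cycle_def del_edges_def)
      have cdis: "set c \<inter> X = {}" using cc by (auto simp: is_cycle_def)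
      have g1: "\<forall>i<length (cs @ [c]). is_cycle V E ((cs @ [c]) ! i) \<and> length ((cs @ [c]) ! i) < l"
      proof (intro allI impI)
        fix i assume "i < length (cs @ [c])"
        thus "is_cycle V E ((cs @ [c]) ! i) \<and> length ((cs @ [c]) ! i) < l"
          using cyc cG cl by (cases "i < length cs") (auto simp: nth_append)
      qed
      have g2: "\<forall>i<length (cs @ [c]). \<forall>j<length (cs @ [c]). i \<noteq> j \<longrightarrow> set ((cs @ [c]) ! i) \<inter> set ((cs @ [c]) ! j) = {}"
      proof (intro allI impI)
        fix i j assume ij: "i < length (cs @ [c])" "j < length (cs @ [c])" "i \<noteq> j"
        show "set ((cs @ [c]) ! i) \<inter> set ((cs @ [c]) ! j) = {}"
        proof (cases "i < length cs")
          case True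
          show ?thesis
          proof (cases "j < length cs")
            case True
            thus ?thesis using gd ij \<open>i < length cs\<close> by (auto simp: good_def nth_append)
          next
            case False
            hence "j = length cs" using ij by simp
            thus ?thesis using \<open>i < length cs\<close> cdis unfolding X_def by (auto simp: nth_append)
          qed
        next
          case False
          hence "i = length cs" using ij by simp
          hence "j < length cs" using ij by simp
          thus ?thesis using \<open>i = length cs\<close> cdis unfolding X_def by (auto simp: nth_append)
        qed
      qed
      have "good l V E (cs @ [c])" unfolding good_def using g1 g2 by blast
      hence "P (Suc m)" unfolding P_def using lc by (intro exI[of _ "cs @ [c]"]) simp
      thus False using mx by fastforce
    qed
  qed
  show ?thesis using XV cX gi by blast
qed

theorem mainTheorem7:
  shows "\<exists>g :: nat \<Rightarrow> nat \<Rightarrow> nat \<Rightarrow> nat. \<forall>l t k. l \<ge> 3 \<longrightarrow> t \<ge> 1 \<longrightarrow> k \<ge> 1 \<longrightarrow>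
    (\<forall>V E. simple_graph V E \<longrightarrow> Ok_free k V E \<longrightarrow> \<not> has_Ktt t V E \<longrightarrow>
      (\<exists>X. X \<subseteq> V \<and> card X \<le> g l t k \<and> girth (V - X) (del_edges E X) \<ge> enat l))"
proof (intro exI[of _ "\<lambda>l t k. (SOME N::nat. partn_lst {..<N} (replicate (Suc (l*l)) (k+2*t)) 2) * l"] allI impI)
  fix l t k :: nat and V E
  assume "simple_graph V E" "Ok_free k V E" "\<not> has_Ktt t V E"
  moreover have "partn_lst {..<(SOME N::nat. partn_lst {..<N} (replicate (Suc (l*l)) (k+2*t)) 2)} (replicate (Suc (l*l)) (k+2*t)) 2"
    by (rule someI_ex[OF ramsey_full])
  ultimately show "\<exists>X. X \<subseteq> V \<and> card X \<le> (SOME N::nat. partn_lst {..<N} (replicate (Suc (l*l)) (k+2*t)) 2) * l \<and> girth (V - X) (del_edges E X) \<ge> enat l"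
    by (rule bound)
qed

end
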